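(* Let $a_1,\dots,a_{12},b_1,\dots,b_{12}\in\mathbb{C}^6$ be row vectors of length 6 such that the three $12\times12$ matrices $M$ with rows $(a_k\,|\,b_k)$, $k=1,\dots,12$; $M_R$ with rows, in order, $(a_1|a_2),(b_1|b_2),(a_3|a_4),(b_3|b_4),(a_5|a_6),(b_5|b_6),(a_7|a_8),(b_7|b_8),(a_9|a_{10}),(b_9|b_{10}),(a_{11}|a_{12}),(b_{11}|b_{12})$; $M_\Gamma$ with rows, in order, $(a_1|a_3),(a_2|a_4),(b_1|b_3),(b_2|b_4),(a_5|a_7),(a_6|a_8),(b_5|b_7),(b_6|b_8),(a_9|a_{11}),(a_{10}|a_{12}),(b_9|b_{11}),(b_{10}|b_{12})$ are all unitary (here $(x|y)$ denotes the concatenation of two length-6 vectors into a length-12 row). Define further vectors by, for $k=1,\dots,4$: $c_{4+k}=a_k,\ d_{4+k}=b_k,\ e_{8+k}=a_k,\ f_{8+k}=b_k$; $c_{8+k}=a_{4+k},\ d_{8+k}=b_{4+k},\ e_k=a_{4+k},\ f_k=b_{4+k}$; $c_k=a_{8+k},\ d_k=b_{8+k},\ e_{4+k}=a_{8+k},\ f_{4+k}=b_{8+k}$. Let $U$ be the $36\times36$ matrix each of whose rows is split into six consecutive column blocks of length 6, where every row has exactly two possibly nonzero adjacent column blocks and all other entries zero, specified as follows (a pair $xy$ placed in column blocks $(p,p+1)$): rows 1–2: $a_1b_1,a_2b_2$ in blocks (1,2); rows 3–4: $c_1d_1,c_2d_2$ in (3,4); rows 5–6: $e_1f_1,e_2f_2$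 in (5,6); rows 7–8: $a_3b_3,a_4b_4$ in (1,2); rows 9–10: $c_3d_3,c_4d_4$ in (3,4); rows 11–14: $e_3f_3,e_4f_4,e_5f_5,e_6f_6$ in (5,6); rows 15–16: $a_5b_5,a_6b_6$ in (1,2); rows 17–18: $c_5d_5,c_6d_6$ in (3,4); rows 19–20: $e_7f_7,e_8f_8$ in (5,6); rows 21–22: $a_7b_7,a_8b_8$ in (1,2); rows 23–26: $c_7d_7,c_8d_8,c_9d_9,c_{10}d_{10}$ in (3,4); rows 27–28: $e_9f_9,e_{10}f_{10}$ in (5,6); rows 29–30: $a_9b_9,a_{10}b_{10}$ in (1,2); rows 31–32: $c_{11}d_{11},c_{12}d_{12}$ in (3,4); rows 33–34: $e_{11}f_{11},e_{12}f_{12}$ in (5,6); rows 35–36: $a_{11}b_{11},a_{12}b_{12}$ in (1,2). Then $U$ is a multiunitary matrix of size 36.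
   Context: Index rows and columns of a $36\times36$ matrix by pairs $(i,j)$, $i,j\in\{1,\dots,6\}$, with $(i,j)\mapsto 6(i-1)+j$. The reshuffling of $M$ is $M^R_{(i,j),(k,l)}=M_{(i,k),(j,l)}$ and the partial transpose is $M^\Gamma_{(i,j),(k,l)}=M_{(i,l),(k,j)}$. A matrix $U$ of size 36 is multiunitary if $U$, $U^R$ and $U^\Gamma$ are all unitary. *)

theory Defs
  imports "Jordan_Normal_Form.Matrix"
begin

definition adj :: "complex mat \<Rightarrow> complex mat" where
  "adj A = mat (dim_col A) (dim_row A) (\<lambda>(i,j). cnj (A $$ (j,i)))"

definition unitary_mat :: "nat \<Rightarrow> complex mat \<Rightarrow> bool" where
  "unitary_mat n A \<longleftrightarrow> A \<in> carrier_mat n n \<and> A * adj A = 1\<^sub>m n \<and> adj A * A = 1\<^sub>m n"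

(* Row/column (i,j), i,j in {1..6}, has 1-based index 6(i-1)+j, i.e. 0-based index
   6*(i-1)+(j-1).  For a 0-based index r: i-1 = r div 6, j-1 = r mod 6. *)
definition reshuffle :: "complex mat \<Rightarrow> complex mat" where
  "reshuffle M = mat 36 36 (\<lambda>(r,c). M $$ (6 * (r div 6) + c div 6, 6 * (r mod 6) + c mod 6))"

definition partial_transpose :: "complex mat \<Rightarrow> complex mat" where
  "partial_transpose M = mat 36 36 (\<lambda>(r,c). M $$ (6 * (r div 6) + c mod 6, 6 * (c div 6) + r mod 6))"

definition multiunitary36 :: "complex mat \<Rightarrow> bool" where
  "multiunitary36 U \<longleftrightarrow> unitary_mat 36 U \<and> unitary_mat 36 (reshuffle U) \<and> unitary_mat 36 (partial_transpose U)"

(* Vectors of length 6 are functions nat => complex with components indexed 1..6.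
   A family a_1..a_12 is a :: nat => nat => complex, a k j = j-th component of a_k. *)
type_synonym cvec = "nat \<Rightarrow> complex"

definition catrow :: "cvec \<Rightarrow> cvec \<Rightarrow> nat \<Rightarrow> complex" where
  "catrow x y = (\<lambda>c. if c < 6 then x (c + 1) else y (c - 5))"

definition mat12_of_rows :: "(nat \<Rightarrow> complex) list \<Rightarrow> complex mat" where
  "mat12_of_rows rs = mat 12 12 (\<lambda>(r,c). (rs ! r) c)"

definition M_mat :: "(nat \<Rightarrow> cvec) \<Rightarrow> (nat \<Rightarrow> cvec) \<Rightarrow> complex mat" where
  "M_mat a b = mat12_of_rows (map (\<lambda>k. catrow (a k) (b k)) [1..<13])"

definition MR_mat :: "(nat \<Rightarrow> cvec) \<Rightarrow> (nat \<Rightarrow> cvec) \<Rightarrow> complex mat" where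
  "MR_mat a b = mat12_of_rows
     [catrow (a 1) (a 2), catrow (b 1) (b 2), catrow (a 3) (a 4), catrow (b 3) (b 4),
      catrow (a 5) (a 6), catrow (b 5) (b 6), catrow (a 7) (a 8), catrow (b 7) (b 8),
      catrow (a 9) (a 10), catrow (b 9) (b 10), catrow (a 11) (a 12), catrow (b 11) (b 12)]"

definition MG_mat :: "(nat \<Rightarrow> cvec) \<Rightarrow> (nat \<Rightarrow> cvec) \<Rightarrow> complex mat" where
  "MG_mat a b = mat12_of_rows
     [catrow (a 1) (a 3), catrow (a 2) (a 4), catrow (b 1) (b 3), catrow (b 2) (b 4),
      catrow (a 5) (a 7), catrow (a 6) (a 8), catrow (b 5) (b 7), catrow (b 6) (b 8),
      catrow (a 9) (a 11), catrow (a 10) (a 12), catrow (b 9) (b 11), catrow (b 10) (b 12)]"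

(* c,d,e,f (indices 1..12), as in the paper, for k = 1..4:
   c_{4+k}=a_k, c_{8+k}=a_{4+k}, c_k=a_{8+k}; e_{8+k}=a_k, e_k=a_{4+k}, e_{4+k}=a_{8+k};
   d, f likewise with b. *)
definition shiftC :: "(nat \<Rightarrow> cvec) \<Rightarrow> nat \<Rightarrow> cvec" where
  "shiftC a m = (if m \<le> 4 then a (m + 8) else a (m - 4))"

definition shiftE :: "(nat \<Rightarrow> cvec) \<Rightarrow> nat \<Rightarrow> cvec" where
  "shiftE a m = (if m \<le> 8 then a (m + 4) else a (m - 8))"

(* Each row: (p, x, y) meaning x in column block p, y in column block p+1 (blocks 1..6). *)
definition U_rows :: "(nat \<Rightarrow> cvec) \<Rightarrow> (nat \<Rightarrow> cvec) \<Rightarrow> (nat \<times> cvec \<times> cvec) list" where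
  "U_rows a b = (let c = shiftC a; d = shiftC b; e = shiftE a; f = shiftE b in
     [(1, a 1, b 1), (1, a 2, b 2),
      (3, c 1, d 1), (3, c 2, d 2),
      (5, e 1, f 1), (5, e 2, f 2),
      (1, a 3, b 3), (1, a 4, b 4),
      (3, c 3, d 3), (3, c 4, d 4),
      (5, e 3, f 3), (5, e 4, f 4), (5, e 5, f 5), (5, e 6, f 6),
      (1, a 5, b 5), (1, a 6, b 6),
      (3, c 5, d 5), (3, c 6, d 6),
      (5, e 7, f 7), (5, e 8, f 8),
      (1, a 7, b 7), (1, a 8, b 8),
      (3, c 7, d 7), (3, c 8, d 8), (3, c 9, d 9), (3, c 10, d 10),
      (5, e 9, f 9), (5, e 10, f 10),
      (1, a 9, b 9), (1, a 10, b 10),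
      (3, c 11, d 11), (3, c 12, d 12),
      (5, e 11, f 11), (5, e 12, f 12),
      (1, a 11, b 11), (1, a 12, b 12)])"

definition U_mat :: "(nat \<Rightarrow> cvec) \<Rightarrow> (nat \<Rightarrow> cvec) \<Rightarrow> complex mat" where
  "U_mat a b = mat 36 36 (\<lambda>(r,col).
     (case U_rows a b ! r of (p, x, y) \<Rightarrow>
        if col div 6 + 1 = p then x (col mod 6 + 1)
        else if col div 6 + 1 = p + 1 then y (col mod 6 + 1)
        else 0))"

end

theory Submission
  imports Defs "Jordan_Normal_Form.Determinant"
begin

lemma all6: "(\<forall>i<(6::nat). P i) \<longleftrightarrow> P 0 \<and> P 1 \<and> P 2 \<and> P 3 \<and> P 4 \<and> P 5"
  by (simp add: numeral_eq_Suc All_less_Suc2)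
lemma all12: "(\<forall>i<(12::nat). P i) \<longleftrightarrow> P 0 \<and> P 1 \<and> P 2 \<and> P 3 \<and> P 4 \<and> P 5 \<and> P 6 \<and> P 7 \<and> P 8 \<and> P 9 \<and> P 10 \<and> P 11"
  by (simp add: numeral_eq_Suc All_less_Suc2)

lemma sum_split: "(\<Sum>c<m*n. f c) = (\<Sum>J<m. \<Sum>L<n. f (n*J+L::nat))"
proof (induction m)
  case 0 then show ?case by simp
next
  case (Suc m)
  have "(\<Sum>c<Suc m*n. f c) = (\<Sum>c<m*n. f c) + (\<Sum>c\<in>{m*n..<m*n+n}. f c)"
    by (simp add: add.commute sum.atLeastLessThan_concat[symmetric] lessThan_atLeast0 )
  also have "(\<Sum>c\<in>{m*n..<m*n+n}. f c) = (\<Sum>L<n. f (n*m+L))"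
    using sum.shift_bounds_nat_ivl[of f 0 "m*n" n] by (simp add: lessThan_atLeast0 add.commute mult.commute)
  finally show ?case using Suc by simp
qed

lemma sum36: "(\<Sum>c<36. f c) = (\<Sum>J<6. \<Sum>L<6. f (6*J+L::nat))"
  using sum_split[of f 6 6] by simp
lemma sum12: "(\<Sum>c<12. f c) = (\<Sum>J<2. \<Sum>L<6. f (6*J+L::nat))"
  using sum_split[of f 2 6] by simp

lemma sum6: "(\<Sum>J<(6::nat). f J) = f 0 + f 1 + f 2 + f 3 + f 4 + (f 5::'a::comm_monoid_add)"
  by (simp add: eval_nat_numeral add.assoc)

definition ip :: "cvec \<Rightarrow> cvec \<Rightarrow> complex" where
  "ip x y = (\<Sum>L<6. x (Suc L) * cnj (y (Suc L)))"

lemma ip_zero[simp]: "ip (\<lambda>_. 0) y = 0" "ip x (\<lambda>_. 0) = 0"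
  by (simp_all add: ip_def)

lemma catrow_ip: "(\<Sum>c<12. catrow x y c * cnj (catrow x' y' c)) = ip x x' + ip y y'"
  unfolding sum12 by (simp add: catrow_def ip_def numeral_2_eq_2)

lemma AadjA: assumes "A \<in> carrier_mat n n" "i < n" "j < n"
  shows "(A * adj A) $$ (i,j) = (\<Sum>c<n. A $$ (i,c) * cnj (A $$ (j,c)))"
  using assms by (simp add: adj_def scalar_prod_def lessThan_atLeast0 row_def col_def)

lemma adjAA: assumes "A \<in> carrier_mat n n" "i < n" "j < n"
  shows "(adj A * A) $$ (j,i) = (\<Sum>k<n. A $$ (k,i) * cnj (A $$ (k,j)))"
  using assms by (simp add: adj_def scalar_prod_def lessThan_atLeast0 row_def col_def mult.commute)


lemma all36: "(\<forall>i<(36::nat). P i) \<longleftrightarrow> P 0 \<and> P 1 \<and> P 2 \<and> P 3 \<and> P 4 \<and> P 5 \<and> P 6 \<and> P 7 \<and> P 8 \<and> P 9 \<and> P 10 \<and> P 11 \<and> P 12 \<and> P 13 \<and> P 14 \<and> P 15 \<and> P 16 \<and> P 17 \<and> P 18 \<and> P 19 \<and> P 20 \<and> P 21 \<and> P 22 \<and> P 23 \<and> P 24 \<and> P 25 \<and> P 26 \<and> P 27 \<and> P 28 \<and> P 29 \<and> P 30 \<and> P 31 \<and> P 32 \<and> P 33 \<and> P 34 \<and> P 35"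
  by (simp add: numeral_eq_Suc All_less_Suc2)

definition Pl :: "nat list" where "Pl = [1,1,3,3,5,5,1,1,3,3,5,5,5,5,1,1,3,3,5,5,1,1,3,3,3,3,5,5,1,1,3,3,5,5,1,1]"
definition Kl :: "nat list" where "Kl = [1,2,9,10,5,6,3,4,11,12,7,8,9,10,5,6,1,2,11,12,7,8,3,4,5,6,1,2,9,10,7,8,3,4,11,12]"

lemma U_rows_eq: "r < 36 \<Longrightarrow> U_rows a b ! r = (Pl ! r, a (Kl ! r), b (Kl ! r))"
proof -
  have "\<forall>r<36. U_rows a b ! r = (Pl ! r, a (Kl ! r), b (Kl ! r))"
    unfolding all36 by (simp add: U_rows_def Let_def shiftC_def shiftE_def Pl_def Kl_def)
  then show "r < 36 \<Longrightarrow> ?thesis" by blast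
qed

definition blk :: "(nat \<Rightarrow> cvec) \<Rightarrow> (nat \<Rightarrow> cvec) \<Rightarrow> nat \<Rightarrow> nat \<Rightarrow> cvec" where
  "blk a b r J = (if Suc J = Pl ! r then a (Kl ! r) else if J = Pl ! r then b (Kl ! r) else (\<lambda>_. 0))"

lemma U_entry: "r < 36 \<Longrightarrow> J < 6 \<Longrightarrow> L < 6 \<Longrightarrow> U_mat a b $$ (r, 6*J+L) = blk a b r J (Suc L)"
  by (simp add: U_mat_def U_rows_eq blk_def)


lemma Pl_vals: "r < 36 \<Longrightarrow> Pl ! r = 1 \<or> Pl ! r = 3 \<or> Pl ! r = 5"
proof -
  have "\<forall>r<36. Pl ! r = 1 \<or> Pl ! r = 3 \<or> Pl ! r = 5" unfolding all36 by (simp add: Pl_def)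
  then show "r < 36 \<Longrightarrow> ?thesis" by blast
qed

lemma U_carrier: "U_mat a b \<in> carrier_mat 36 36" by (simp add: U_mat_def)

lemma U_prod: assumes "r < 36" "s < 36"
  shows "(U_mat a b * adj (U_mat a b)) $$ (r,s) = (\<Sum>J<6. ip (blk a b r J) (blk a b s J))"
  unfolding AadjA[OF U_carrier assms] sum36 ip_def
  by (rule sum.cong[OF refl], rule sum.cong[OF refl], simp add: U_entry assms)

lemma U_blocksum: assumes "r < 36" "s < 36"
  shows "(\<Sum>J<6. ip (blk a b r J) (blk a b s J)) = (if Pl ! r = Pl ! s then ip (a (Kl!r)) (a (Kl!s)) + ip (b (Kl!r)) (b (Kl!s)) else 0)"
  using Pl_vals[OF assms(1)] Pl_vals[OF assms(2)]
  by (elim disjE; simp add: sum6 blk_def)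

lemma M_entry: "i < 12 \<Longrightarrow> c < 12 \<Longrightarrow> M_mat a b $$ (i,c) = catrow (a (Suc i)) (b (Suc i)) c"
  by (simp add: M_mat_def mat12_of_rows_def)

lemma hypM: assumes "unitary_mat 12 (M_mat a b)" "1 \<le> k" "k \<le> 12" "1 \<le> k'" "k' \<le> 12"
  shows "ip (a k) (a k') + ip (b k) (b k') = (if k = k' then 1 else 0)"
proof -
  have C: "M_mat a b \<in> carrier_mat 12 12" by (simp add: M_mat_def mat12_of_rows_def)
  have E: "M_mat a b * adj (M_mat a b) = 1\<^sub>m 12" using assms(1) by (simp add: unitary_mat_def)
  have i: "k - 1 < 12" "k' - 1 < 12" using assms by auto
  have "(M_mat a b * adj (M_mat a b)) $$ (k-1, k'-1) = (if k = k' then 1 else 0)"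
    using E i assms by auto
  moreover have "(M_mat a b * adj (M_mat a b)) $$ (k-1, k'-1) = ip (a k) (a k') + ip (b k) (b k')"
    unfolding AadjA[OF C i] using i assms by (simp add: M_entry catrow_ip[symmetric])
  ultimately show ?thesis by simp
qed


lemma Kl_range: "r < 36 \<Longrightarrow> 1 \<le> Kl ! r \<and> Kl ! r \<le> 12"
proof -
  have "\<forall>r<36. 1 \<le> Kl ! r \<and> Kl ! r \<le> 12" unfolding all36 by (simp add: Kl_def)
  then show "r < 36 \<Longrightarrow> ?thesis" by blast
qed

lemma PK_inj: assumes "r < 36" "s < 36" "Pl ! r = Pl ! s" "Kl ! r = Kl ! s" shows "r = s"
proof -
  have d: "distinct (zip Pl Kl)" by (simp add: Pl_def Kl_def)
  have l: "length (zip Pl Kl) = 36" "length Pl = 36" "length Kl = 36" by (simp_all add: Pl_def Kl_def)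
  have "zip Pl Kl ! r = zip Pl Kl ! s" using assms l by simp
  then show ?thesis using nth_eq_iff_index_eq[OF d, of r s] assms l by simp
qed

lemma unitary_of_right: assumes "A \<in> carrier_mat n n" "A * adj A = 1\<^sub>m n"
  shows "unitary_mat n A"
proof -
  have "adj A \<in> carrier_mat n n" using assms(1) by (simp add: adj_def)
  then show ?thesis using assms mat_mult_left_right_inverse unfolding unitary_mat_def by blast
qed

lemma U_unitary: assumes "unitary_mat 12 (M_mat a b)" shows "unitary_mat 36 (U_mat a b)"
proof (rule unitary_of_right[OF U_carrier], rule eq_matI)
  fix r s assume rs: "r < dim_row (1\<^sub>m 36)" "s < dim_col (1\<^sub>m 36)"
  then have r: "r < 36" and s: "s < 36" by auto
  show "(U_mat a b * adj (U_mat a b)) $$ (r, s) = 1\<^sub>m 36 $$ (r, s)"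
    unfolding U_prod[OF r s] U_blocksum[OF r s]
    using hypM[OF assms] Kl_range[OF r] Kl_range[OF s] PK_inj[OF r s] r s by auto
qed (auto simp: U_mat_def adj_def)


definition LR :: "(nat \<Rightarrow> cvec) \<Rightarrow> (nat \<Rightarrow> cvec) \<Rightarrow> (cvec \<times> cvec) list" where
  "LR a b = [(a 1, a 2), (b 1, b 2), (a 3, a 4), (b 3, b 4), (a 5, a 6), (b 5, b 6),
     (a 7, a 8), (b 7, b 8), (a 9, a 10), (b 9, b 10), (a 11, a 12), (b 11, b 12)]"

lemma MR_entry: "i < 12 \<Longrightarrow> c < 12 \<Longrightarrow> MR_mat a b $$ (i,c) = catrow (fst (LR a b ! i)) (snd (LR a b ! i)) c"
proof -
  have "MR_mat a b = mat12_of_rows (map (\<lambda>p. catrow (fst p) (snd p)) (LR a b))"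
    by (simp add: MR_mat_def LR_def)
  moreover have "length (LR a b) = 12" by (simp add: LR_def)
  ultimately show "i < 12 \<Longrightarrow> c < 12 \<Longrightarrow> ?thesis" by (simp add: mat12_of_rows_def)
qed

lemma hypMR: assumes "unitary_mat 12 (MR_mat a b)"
  shows "\<forall>i<12. \<forall>j<12. ip (fst (LR a b ! i)) (fst (LR a b ! j)) + ip (snd (LR a b ! i)) (snd (LR a b ! j)) = (if i = j then 1 else 0)"
proof (intro allI impI)
  fix i j :: nat assume i: "i < 12" and j: "j < 12"
  have C: "MR_mat a b \<in> carrier_mat 12 12" by (simp add: MR_mat_def mat12_of_rows_def)
  have E: "MR_mat a b * adj (MR_mat a b) = 1\<^sub>m 12" using assms by (simp add: unitary_mat_def)
  have "(MR_mat a b * adj (MR_mat a b)) $$ (i, j) = (if i = j then 1 else 0)" using E i j by auto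
  then show "ip (fst (LR a b ! i)) (fst (LR a b ! j)) + ip (snd (LR a b ! i)) (snd (LR a b ! j)) = (if i = j then 1 else 0)"
    unfolding AadjA[OF C i j] using i j by (simp add: MR_entry catrow_ip)
qed

definition tR :: "nat list" where "tR = [0,0,1,1,2,2,0,0,1,1,2,2,1,1,2,2,0,0,1,1,2,2,0,0,2,2,0,0,1,1,2,2,0,0,1,1]"
definition mR :: "nat list" where "mR = [0,1,8,9,4,5,2,3,10,11,6,7,4,5,0,1,8,9,6,7,2,3,10,11,8,9,4,5,0,1,10,11,6,7,2,3]"

lemma blkR: assumes "I < 6" "J < 6" "K < 6"
  shows "blk a b (6*I+K) J = (if K div 2 = tR!(6*I+J) then (if even K then fst (LR a b ! (mR!(6*I+J))) else snd (LR a b ! (mR!(6*I+J)))) else (\<lambda>_. 0))"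
proof -
  have "\<forall>J<6. \<forall>K<6. blk a b (6*0+K) J = (if K div 2 = tR!(6*0+J) then (if even K then fst (LR a b ! (mR!(6*0+J))) else snd (LR a b ! (mR!(6*0+J)))) else (\<lambda>_. 0))"
    unfolding all6 by (simp add: blk_def Pl_def Kl_def LR_def tR_def mR_def)
  have "\<forall>I<6. \<forall>J<6. \<forall>K<6. blk a b (6*I+K) J = (if K div 2 = tR!(6*I+J) then (if even K then fst (LR a b ! (mR!(6*I+J))) else snd (LR a b ! (mR!(6*I+J)))) else (\<lambda>_. 0))"
    unfolding all6 by (simp add: blk_def Pl_def Kl_def LR_def tR_def mR_def)
  then show ?thesis using assms by blast
qed

lemma tmR: "r < 36 \<Longrightarrow> tR ! r < 3 \<and> mR ! r < 12"
proof -
  have "\<forall>r<36. tR ! r < 3 \<and> mR ! r < 12" unfolding all36 by (simp add: tR_def mR_def)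
  then show "r < 36 \<Longrightarrow> ?thesis" by blast
qed

lemma tmR_inj: assumes "r < 36" "s < 36" "tR ! r = tR ! s" "mR ! r = mR ! s" shows "r = s"
proof -
  have d: "distinct (zip tR mR)" by (simp add: tR_def mR_def)
  have l: "length (zip tR mR) = 36" "length tR = 36" "length mR = 36" by (simp_all add: tR_def mR_def)
  have "zip tR mR ! r = zip tR mR ! s" using assms l by simp
  then show ?thesis using nth_eq_iff_index_eq[OF d, of r s] assms l by simp
qed

lemma R_carrier: "reshuffle (U_mat a b) \<in> carrier_mat 36 36" by (simp add: reshuffle_def)

lemma UR_entry: assumes "I < 6" "J < 6" "K < 6" "L < 6"
  shows "reshuffle (U_mat a b) $$ (6*I+J, 6*K+L) = blk a b (6*I+K) J (Suc L)"
proof -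
  have "6*I+J < 36" "6*K+L < 36" "6*I+K < 36" using assms by linarith+
  then show ?thesis using assms by (simp add: reshuffle_def U_entry[symmetric])
qed

lemma UR_prod: assumes "I < 6" "J < 6" "I' < 6" "J' < 6"
  shows "(reshuffle (U_mat a b) * adj (reshuffle (U_mat a b))) $$ (6*I+J, 6*I'+J') =
     (\<Sum>K<6. ip (blk a b (6*I+K) J) (blk a b (6*I'+K) J'))"
proof -
  have b: "6*I+J < 36" "6*I'+J' < 36" using assms by linarith+
  show ?thesis
  unfolding AadjA[OF R_carrier b] sum36 ip_def
  by (intro sum.cong refl, simp add: UR_entry assms)
qed

lemma sum_sel: assumes "t < 3" "t' < (3::nat)"
  shows "(\<Sum>K<6. ip (if K div 2 = t then (if even K then x else y) else (\<lambda>_. 0))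
                   (if K div 2 = t' then (if even K then x' else y') else (\<lambda>_. 0)))
     = (if t = t' then ip x x' + ip y y' else 0)"
proof -
  have "t = 0 \<or> t = 1 \<or> t = 2" "t' = 0 \<or> t' = 1 \<or> t' = 2" using assms by auto
  then show ?thesis unfolding sum6 by (elim disjE; simp)
qed

lemma UR_val: assumes "unitary_mat 12 (MR_mat a b)" "I < 6" "J < 6" "I' < 6" "J' < 6"
  shows "(\<Sum>K<6. ip (blk a b (6*I+K) J) (blk a b (6*I'+K) J')) = (if 6*I+J = 6*I'+J' then 1 else 0)"
proof -
  define r where "r = 6*I+J"
  define s where "s = 6*I'+J'"
  have r: "r < 36" and s: "s < 36" using assms unfolding r_def s_def by linarith+
  have blk: "\<And>K. K < 6 \<Longrightarrow> blk a b (6*I+K) J = (if K div 2 = tR!r then (if even K then fst (LR a b ! (mR!r)) else snd (LR a b ! (mR!r))) else (\<lambda>_. 0))"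
     "\<And>K. K < 6 \<Longrightarrow> blk a b (6*I'+K) J' = (if K div 2 = tR!s then (if even K then fst (LR a b ! (mR!s)) else snd (LR a b ! (mR!s))) else (\<lambda>_. 0))"
    using blkR assms unfolding r_def s_def by auto
  have "(\<Sum>K<6. ip (blk a b (6*I+K) J) (blk a b (6*I'+K) J')) =
     (if tR!r = tR!s then ip (fst (LR a b ! (mR!r))) (fst (LR a b ! (mR!s))) + ip (snd (LR a b ! (mR!r))) (snd (LR a b ! (mR!s))) else 0)"
    using tmR[OF r] tmR[OF s]
    by (subst sum.cong[OF refl, where h="\<lambda>K. ip (if K div 2 = tR!r then (if even K then fst (LR a b ! (mR!r)) else snd (LR a b ! (mR!r))) else (\<lambda>_. 0))
                   (if K div 2 = tR!s then (if even K then fst (LR a b ! (mR!s)) else snd (LR a b ! (mR!s))) else (\<lambda>_. 0))"],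
        simp add: blk, simp add: sum_sel)
  also have "\<dots> = (if r = s then 1 else 0)"
    using hypMR[OF assms(1)] tmR[OF r] tmR[OF s] tmR_inj[OF r s] by auto
  finally show ?thesis unfolding r_def s_def .
qed

lemma UR_unitary: assumes "unitary_mat 12 (MR_mat a b)" shows "unitary_mat 36 (reshuffle (U_mat a b))"
proof (rule unitary_of_right[OF R_carrier], rule eq_matI)
  fix r s assume rs: "r < dim_row (1\<^sub>m 36)" "s < dim_col (1\<^sub>m 36)"
  then have r: "r < 36" and s: "s < 36" by auto
  have rr: "r = 6*(r div 6) + r mod 6" "s = 6*(s div 6) + s mod 6" by simp_all
  have b: "r div 6 < 6" "r mod 6 < 6" "s div 6 < 6" "s mod 6 < 6" using r s by auto
  show "(reshuffle (U_mat a b) * adj (reshuffle (U_mat a b))) $$ (r, s) = 1\<^sub>m 36 $$ (r, s)"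
    using UR_prod[OF b] UR_val[OF assms b] rr r s by simp
qed (auto simp: reshuffle_def adj_def)


lemma sum12e: "(\<Sum>k<(12::nat). f k) = f 0 + f 1 + f 2 + f 3 + f 4 + f 5 + f 6 + f 7 + f 8 + f 9 + f 10 + (f 11::'a::comm_monoid_add)"
  by (simp add: eval_nat_numeral add.assoc)

definition LG :: "(nat \<Rightarrow> cvec) \<Rightarrow> (nat \<Rightarrow> cvec) \<Rightarrow> (cvec \<times> cvec) list" where
  "LG a b = [(a 1, a 3), (a 2, a 4), (b 1, b 3), (b 2, b 4), (a 5, a 7), (a 6, a 8), (b 5, b 7), (b 6, b 8),
     (a 9, a 11), (a 10, a 12), (b 9, b 11), (b 10, b 12)]"

definition cv :: "(nat \<Rightarrow> cvec) \<Rightarrow> (nat \<Rightarrow> cvec) \<Rightarrow> nat \<Rightarrow> nat \<Rightarrow> nat \<Rightarrow> complex" where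
  "cv a b k h j = (if h = 0 then fst (LG a b ! k) j else snd (LG a b ! k) j)"

definition colprod :: "(nat \<Rightarrow> cvec) \<Rightarrow> (nat \<Rightarrow> cvec) \<Rightarrow> nat \<Rightarrow> nat \<Rightarrow> nat \<Rightarrow> nat \<Rightarrow> complex" where
  "colprod a b h h' j j' = (\<Sum>k<12. cv a b k h j * cnj (cv a b k h' j'))"

lemma MG_entry: assumes "k < 12" "h < 2" "J < 6"
  shows "MG_mat a b $$ (k, 6*h+J) = cv a b k h (Suc J)"
proof -
  have "MG_mat a b = mat12_of_rows (map (\<lambda>p. catrow (fst p) (snd p)) (LG a b))"
    by (simp add: MG_mat_def LG_def)
  moreover have "length (LG a b) = 12" by (simp add: LG_def)
  moreover have "6*h+J < 12" using assms by linarith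
  moreover have "h = 0 \<or> h = 1" using assms by auto
  ultimately show ?thesis using assms by (auto simp: mat12_of_rows_def catrow_def cv_def)
qed

lemma hypMG: assumes "unitary_mat 12 (MG_mat a b)" "h < 2" "J < 6" "h' < 2" "J' < 6"
  shows "colprod a b h h' (Suc J) (Suc J') = (if 6*h+J = 6*h'+J' then 1 else 0)"
proof -
  have C: "MG_mat a b \<in> carrier_mat 12 12" by (simp add: MG_mat_def mat12_of_rows_def)
  have E: "adj (MG_mat a b) * MG_mat a b = 1\<^sub>m 12" using assms by (simp add: unitary_mat_def)
  have i: "6*h+J < 12" "6*h'+J' < 12" using assms by linarith+
  have "(adj (MG_mat a b) * MG_mat a b) $$ (6*h'+J', 6*h+J) = (if 6*h+J = 6*h'+J' then 1 else 0)"
    using E i by auto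
  then show ?thesis
    unfolding adjAA[OF C i] colprod_def using assms by (simp add: MG_entry)
qed

lemma P_carrier: "partial_transpose (U_mat a b) \<in> carrier_mat 36 36" by (simp add: partial_transpose_def)

lemma PT_entry: assumes "I < 6" "J < 6" "K < 6" "L < 6"
  shows "partial_transpose (U_mat a b) $$ (6*I+J, 6*K+L) = blk a b (6*I+L) K (Suc J)"
proof -
  have "6*I+J < 36" "6*K+L < 36" "6*I+L < 36" using assms by linarith+
  then show ?thesis using assms by (simp add: partial_transpose_def U_entry[symmetric])
qed

lemma blk_comp: assumes "r < 36" "s < 36"
  shows "(\<Sum>K<6. blk a b r K j * cnj (blk a b s K j')) = (if Pl ! r = Pl ! s then a (Kl!r) j * cnj (a (Kl!s) j') + b (Kl!r) j * cnj (b (Kl!s) j') else 0)"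
  using Pl_vals[OF assms(1)] Pl_vals[OF assms(2)]
  by (elim disjE; simp add: sum6 blk_def)

lemma PT_prod: assumes "I < 6" "J < 6" "I' < 6" "J' < 6"
  shows "(partial_transpose (U_mat a b) * adj (partial_transpose (U_mat a b))) $$ (6*I+J, 6*I'+J') =
     (\<Sum>L<6. (if Pl ! (6*I+L) = Pl ! (6*I'+L) then a (Kl!(6*I+L)) (Suc J) * cnj (a (Kl!(6*I'+L)) (Suc J')) + b (Kl!(6*I+L)) (Suc J) * cnj (b (Kl!(6*I'+L)) (Suc J')) else 0))"
proof -
  have b: "6*I+J < 36" "6*I'+J' < 36" using assms by linarith+
  have "(partial_transpose (U_mat a b) * adj (partial_transpose (U_mat a b))) $$ (6*I+J, 6*I'+J') =
     (\<Sum>K<6. \<Sum>L<6. blk a b (6*I+L) K (Suc J) * cnj (blk a b (6*I'+L) K (Suc J')))"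
    unfolding AadjA[OF P_carrier b] sum36
    by (intro sum.cong refl, simp add: PT_entry assms)
  also have "\<dots> = (\<Sum>L<6. \<Sum>K<6. blk a b (6*I+L) K (Suc J) * cnj (blk a b (6*I'+L) K (Suc J')))"
    by (rule sum.swap)
  also have "\<dots> = (\<Sum>L<6. (if Pl ! (6*I+L) = Pl ! (6*I'+L) then a (Kl!(6*I+L)) (Suc J) * cnj (a (Kl!(6*I'+L)) (Suc J')) + b (Kl!(6*I+L)) (Suc J) * cnj (b (Kl!(6*I'+L)) (Suc J')) else 0))"
    by (rule sum.cong[OF refl], rule blk_comp) (use assms in auto)
  finally show ?thesis .
qed


lemma PT_val0: "\<forall>I<6. \<forall>I'<6. (\<Sum>L<6. (if Pl ! (6*I+L) = Pl ! (6*I'+L) then a (Kl!(6*I+L)) j * cnj (a (Kl!(6*I'+L)) j') + b (Kl!(6*I+L)) j * cnj (b (Kl!(6*I'+L)) j') else 0))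
   = (if I div 2 = I' div 2 then colprod a b (I mod 2) (I' mod 2) j j' else 0)"
  unfolding all6 by (simp add: sum6 sum12e Pl_def Kl_def colprod_def cv_def LG_def add_ac)


lemma PT_val: assumes "unitary_mat 12 (MG_mat a b)" "I < 6" "J < 6" "I' < 6" "J' < 6"
  shows "(partial_transpose (U_mat a b) * adj (partial_transpose (U_mat a b))) $$ (6*I+J, 6*I'+J') = (if 6*I+J = 6*I'+J' then 1 else 0)"
proof -
  have h: "I mod 2 < 2" "I' mod 2 < 2" by auto
  have "(partial_transpose (U_mat a b) * adj (partial_transpose (U_mat a b))) $$ (6*I+J, 6*I'+J') =
     (if I div 2 = I' div 2 then colprod a b (I mod 2) (I' mod 2) (Suc J) (Suc J') else 0)"
    unfolding PT_prod[OF assms(2-5)] using PT_val0 assms by blast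
  also have "\<dots> = (if 6*I+J = 6*I'+J' then 1 else 0)"
  proof (cases "I div 2 = I' div 2")
    case True
    have "I = I' \<longleftrightarrow> I mod 2 = I' mod 2" using True
      by (metis div_mult_mod_eq)
    then show ?thesis using True hypMG[OF assms(1) h(1) assms(3) h(2) assms(5)] assms by auto
  next
    case False
    then show ?thesis using assms by auto
  qed
  finally show ?thesis .
qed

lemma PT_unitary: assumes "unitary_mat 12 (MG_mat a b)" shows "unitary_mat 36 (partial_transpose (U_mat a b))"
proof (rule unitary_of_right[OF P_carrier], rule eq_matI)
  fix r s assume rs: "r < dim_row (1\<^sub>m 36)" "s < dim_col (1\<^sub>m 36)"
  then have r: "r < 36" and s: "s < 36" by auto
  have rr: "r = 6*(r div 6) + r mod 6" "s = 6*(s div 6) + s mod 6" by simp_all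
  have b: "r div 6 < 6" "r mod 6 < 6" "s div 6 < 6" "s mod 6 < 6" using r s by auto
  show "(partial_transpose (U_mat a b) * adj (partial_transpose (U_mat a b))) $$ (r, s) = 1\<^sub>m 36 $$ (r, s)"
    using PT_val[OF assms b] rr r s by simp
qed (auto simp: partial_transpose_def adj_def)

theorem mainTheorem14:
  fixes a b :: "nat \<Rightarrow> nat \<Rightarrow> complex"
  assumes "unitary_mat 12 (M_mat a b)"
    and "unitary_mat 12 (MR_mat a b)"
    and "unitary_mat 12 (MG_mat a b)"
  shows "multiunitary36 (U_mat a b)"
  unfolding multiunitary36_def using U_unitary[OF assms(1)] UR_unitary[OF assms(2)] PT_unitary[OF assms(3)] by blast

end
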